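(* Let $2<\alpha<3$. There exists a positive constant $\widetilde C$ such that for all curves $\gamma\in C^\infty(\mathbb R/\mathbb Z,\mathbb R^n)$, all integers $l\ge0$ and all real $m\ge0$, $$\|\partial^{l+3}\gamma\|_{H^{m+\alpha-2}}\le\widetilde C\,\|\partial^lQ^\alpha\gamma\|_{H^m}.$$
   Context: $Q^\alpha\gamma(x)=\lim_{\varepsilon\downarrow0}\int_{|w|\in[\varepsilon,\frac12]}\Big(2\frac{\gamma(x+w)-\gamma(x)-w\dot\gamma(x)}{w^2}-\ddot\gamma(x)\Big)\frac{\mathrm dw}{|w|^\alpha}$. For $s\ge0$, $\|f\|_{H^s}^2=\sum_{k\in\mathbb Z}(1+k^2)^s|\hat f(k)|^2$ with $\hat f(k)=\int_0^1f(x)e^{-2\pi ikx}\,\mathrm dx$. *)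

theory Defs
  imports "HOL-Analysis.Analysis"
begin

definition dn :: "nat \<Rightarrow> (real \<Rightarrow> real^'n) \<Rightarrow> real \<Rightarrow> real^'n" where
  "dn k f = ((\<lambda>g x. vector_derivative g (at x)) ^^ k) f"

definition smooth_closed_curve :: "(real \<Rightarrow> real^'n) \<Rightarrow> bool" where
  "smooth_closed_curve \<gamma> \<longleftrightarrow> (\<forall>x. \<gamma> (x + 1) = \<gamma> x) \<and>
     (\<forall>k x. (dn k \<gamma> has_vector_derivative dn (Suc k) \<gamma> x) (at x))"

definition Qop :: "real \<Rightarrow> (real \<Rightarrow> real^'n) \<Rightarrow> real \<Rightarrow> real^'n" where
  "Qop \<alpha> \<gamma> x = Lim (at_right 0) (\<lambda>\<epsilon>.
     integral {w. \<epsilon> \<le> \<bar>w\<bar> \<and> \<bar>w\<bar> \<le> 1/2}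
       (\<lambda>w. (1 / \<bar>w\<bar> powr \<alpha>) *\<^sub>R
          ((2 / w\<^sup>2) *\<^sub>R (\<gamma> (x + w) - \<gamma> x - w *\<^sub>R dn 1 \<gamma> x) - dn 2 \<gamma> x)))"

definition fourier_coeff :: "(real \<Rightarrow> real^'n) \<Rightarrow> int \<Rightarrow> 'n \<Rightarrow> complex" where
  "fourier_coeff f k i = integral {0..1}
     (\<lambda>x. complex_of_real (f x $ i) * exp (- (2 * of_real pi * \<i> * of_int k * of_real x)))"

definition fourier_coeff_norm_sq :: "(real \<Rightarrow> real^'n) \<Rightarrow> int \<Rightarrow> real" where
  "fourier_coeff_norm_sq f k = (\<Sum>i\<in>UNIV. (cmod (fourier_coeff f k i))\<^sup>2)"

definition Hs_norm :: "real \<Rightarrow> (real \<Rightarrow> real^'n) \<Rightarrow> ereal" where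
  "Hs_norm s f =
    (let w = (\<lambda>k::int. (1 + (real_of_int k)\<^sup>2) powr s * fourier_coeff_norm_sq f k)
     in if w summable_on UNIV then ereal (sqrt (infsum w UNIV)) else \<infinity>)"

end

theory Submission
  imports Defs
begin


lemma dn_0[simp]: "dn 0 f = f" by (simp add: dn_def)
lemma dn_Suc: "dn (Suc k) f = (\<lambda>x. vector_derivative (dn k f) (at x))"
  by (simp add: dn_def)
lemma dn_add: "dn (a + b) f = dn a (dn b f)"
  by (simp add: dn_def funpow_add)

lemma sc_deriv: "smooth_closed_curve f \<Longrightarrow> (dn k f has_vector_derivative dn (Suc k) f x) (at x)"
  by (simp add: smooth_closed_curve_def)

lemma sc_cont: "smooth_closed_curve f \<Longrightarrow> continuous_on UNIV (dn k f)"
  by (metis continuous_at_imp_continuous_on has_vector_derivative_continuous sc_deriv)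

lemma sc_per: assumes "smooth_closed_curve f" shows "dn k f (x + 1) = dn k f x"
proof (induction k arbitrary: x)
  case 0 then show ?case using assms by (simp add: smooth_closed_curve_def)
next
  case (Suc k)
  have e: "(\<lambda>t. dn k f (t + 1)) = dn k f" using Suc by auto
  have "((\<lambda>t. dn k f (t + 1)) has_vector_derivative dn (Suc k) f (x+1)) (at x)"
  proof -
    have "((\<lambda>t. t + 1) has_vector_derivative 1) (at x)"
      by (auto intro!: derivative_eq_intros)
    from vector_diff_chain_at[OF this sc_deriv[OF assms, of k "x+1"]]
    show ?thesis by (simp add: o_def)
  qed
  then show ?case using e sc_deriv[OF assms, of k x] vector_derivative_unique_at by metis
qed

lemma sc_dn: assumes "smooth_closed_curve f" shows "smooth_closed_curve (dn j f)"
  unfolding smooth_closed_curve_def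
proof safe
  show "dn j f (x + 1) = dn j f x" for x using sc_per[OF assms] .
  show "(dn k (dn j f) has_vector_derivative dn (Suc k) (dn j f) x) (at x)" for k x
    using sc_deriv[OF assms, of "k + j" x] by (simp add: dn_add[symmetric])
qed

lemma per_int: assumes "\<And>x. g (x + 1) = g x" shows "g (x + real m) = g x"
  by (induction m arbitrary: x) (auto simp: assms add.assoc[symmetric])

lemma per_bound:
  fixes g :: "real \<Rightarrow> 'a::real_normed_vector"
  assumes "continuous_on UNIV g" "\<And>x. g (x + 1) = g x"
  shows "\<exists>B. \<forall>x. norm (g x) \<le> B"
proof -
  have "compact (g ` {0..1})"
    by (rule compact_continuous_image) (auto intro: continuous_on_subset[OF assms(1)])
  then obtain B where B: "\<And>y. y \<in> g ` {0..1} \<Longrightarrow> norm y \<le> B"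
    using compact_imp_bounded bounded_iff by metis
  have "norm (g x) \<le> B" for x
  proof -
    define r where "r = x - of_int (floor x)"
    have r: "r \<in> {0..1}" unfolding r_def by (auto simp: floor_le_iff) linarith
    have "g x = g r"
    proof (cases "floor x \<ge> 0")
      case True
      then have "x = r + real (nat (floor x))" unfolding r_def by simp
      then show ?thesis using per_int[of g, OF assms(2)] by metis
    next
      case False
      then have "r = x + real (nat (- floor x))" unfolding r_def by simp
      then show ?thesis using per_int[of g, OF assms(2)] by metis
    qed
    then show ?thesis using B r by auto
  qed
  then show ?thesis by blast
qed

lemma sc_bound: assumes "smooth_closed_curve f" shows "\<exists>B. \<forall>x. norm (dn k f x) \<le> B"
  using per_bound[OF sc_cont[OF assms] sc_per[OF assms]] .



lemma ftc_bound:
  fixes \<psi> \<psi>' :: "real \<Rightarrow> 'a::banach"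
  assumes "0 \<le> w" "\<psi> 0 = 0"
    "\<And>t. t \<in> {0..w} \<Longrightarrow> (\<psi> has_vector_derivative \<psi>' t) (at t)"
    "\<And>t. t \<in> {0..w} \<Longrightarrow> norm (\<psi>' t) \<le> B * t ^ n"
  shows "norm (\<psi> w) \<le> B * w ^ Suc n / Suc n"
proof -
  have i1: "(\<psi>' has_integral (\<psi> w - \<psi> 0)) {0..w}"
    using assms(1,3) by (intro fundamental_theorem_of_calculus) (auto intro: has_vector_derivative_at_within)
  have "((\<lambda>t. B * t ^ n) has_integral (B / Suc n * w ^ Suc n - B / Suc n * 0 ^ Suc n)) {0..w}"
  proof (intro fundamental_theorem_of_calculus[OF assms(1)])
    fix t
    have "((\<lambda>t. B / Suc n * t ^ Suc n) has_real_derivative B / Suc n * (real (Suc n) * t ^ (Suc n - Suc 0))) (at t)"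
      by (intro DERIV_cmult DERIV_pow)
    then show "((\<lambda>t. B / Suc n * t ^ Suc n) has_vector_derivative B * t ^ n) (at t within {0..w})"
      by (auto simp: has_real_derivative_iff_has_vector_derivative intro: has_vector_derivative_at_within)
  qed
  then have i2: "((\<lambda>t. B * t ^ n) has_integral (B * w ^ Suc n / Suc n)) {0..w}" by simp
  have "norm (integral {0..w} \<psi>') \<le> integral {0..w} (\<lambda>t. B * t ^ n)"
    using i1 i2 assms(4) by (intro integral_norm_bound_integral) auto
  moreover have "integral {0..w} \<psi>' = \<psi> w" using integral_unique[OF i1] assms(2) by simp
  moreover have "integral {0..w} (\<lambda>t. B * t ^ n) = B * w ^ Suc n / Suc n" using integral_unique[OF i2] .
  ultimately show ?thesis by simp
qed

lemma taylor4:
  fixes f :: "real \<Rightarrow> real^'n"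
  assumes sc: "smooth_closed_curve f" and M: "\<And>x. norm (dn 4 f x) \<le> M" and w: "0 \<le> w"
  shows "norm (f (x + w) + f (x - w) - 2 *\<^sub>R f x - w\<^sup>2 *\<^sub>R dn 2 f x) \<le> M * w ^ 4 / 12"
proof -
  have D: "\<And>k y. (dn k f has_vector_derivative dn (Suc k) f y) (at y)" using sc_deriv[OF sc] .
  have Dp: "((\<lambda>t. dn k f (x + t)) has_vector_derivative dn (Suc k) f (x + t)) (at t)" for k t
  proof -
    have "((\<lambda>t. x + t) has_vector_derivative 1) (at t)" by (auto intro!: derivative_eq_intros)
    from vector_diff_chain_at[OF this D] show ?thesis by (simp add: o_def)
  qed
  have Dm: "((\<lambda>t. dn k f (x - t)) has_vector_derivative - dn (Suc k) f (x - t)) (at t)" for k t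
  proof -
    have "((\<lambda>t. x - t) has_vector_derivative -1) (at t)" by (auto intro!: derivative_eq_intros)
    from vector_diff_chain_at[OF this D] show ?thesis by (simp add: o_def)
  qed
  have s1: "norm (dn 3 f (x + t) - dn 3 f (x - t)) \<le> 2 * M * t ^ 1 / 1" if t: "t \<in> {0..w}" for t
  proof -
    have "norm (dn 3 f (x + t) - dn 3 f (x - t)) \<le> (2 * M) * t ^ Suc 0 / Suc 0"
    proof (rule ftc_bound[where \<psi>' = "\<lambda>t. dn 4 f (x + t) + dn 4 f (x - t)"])
      show "0 \<le> t" using t by auto
      show "((\<lambda>t. dn 3 f (x + t) - dn 3 f (x - t)) has_vector_derivative
              dn 4 f (x + s) + dn 4 f (x - s)) (at s)" for s
        using has_vector_derivative_diff[OF Dp[of 3 s] Dm[of 3 s]] by (simp add: numeral_eq_Suc)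
      show "norm (dn 4 f (x + s) + dn 4 f (x - s)) \<le> 2 * M * s ^ 0" for s
        using norm_triangle_le[OF add_mono[OF M M]] by simp
    qed simp
    then show ?thesis by simp
  qed
  have s2: "norm (dn 2 f (x + t) + dn 2 f (x - t) - 2 *\<^sub>R dn 2 f x) \<le> M * t ^ 2" if t: "t \<in> {0..w}" for t
  proof -
    have "norm (dn 2 f (x + t) + dn 2 f (x - t) - 2 *\<^sub>R dn 2 f x) \<le> (2 * M) * t ^ Suc 1 / Suc 1"
    proof (rule ftc_bound[where \<psi>' = "\<lambda>t. dn 3 f (x + t) - dn 3 f (x - t)"])
      show "0 \<le> t" using t by auto
      show "((\<lambda>t. dn 2 f (x + t) + dn 2 f (x - t) - 2 *\<^sub>R dn 2 f x) has_vector_derivative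
              dn 3 f (x + s) - dn 3 f (x - s)) (at s)" for s
        using has_vector_derivative_diff[OF has_vector_derivative_add[OF Dp[of 2 s] Dm[of 2 s]]
           has_vector_derivative_const[of "2 *\<^sub>R dn 2 f x"]] by (simp add: numeral_eq_Suc)
      show "norm (dn 3 f (x + s) - dn 3 f (x - s)) \<le> 2 * M * s ^ 1" if "s \<in> {0..t}" for s
        using s1[of s] that t by simp
    qed (simp add: scaleR_2)
    then show ?thesis by (simp add: power2_eq_square)
  qed
  have s3: "norm (dn 1 f (x + t) - dn 1 f (x - t) - (2 * t) *\<^sub>R dn 2 f x) \<le> M * t ^ 3 / 3" if t: "t \<in> {0..w}" for t
  proof -
  have "norm (dn 1 f (x + t) - dn 1 f (x - t) - (2 * t) *\<^sub>R dn 2 f x) \<le> M * t ^ Suc 2 / Suc 2"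
  proof (rule ftc_bound[where \<psi>' = "\<lambda>t. dn 2 f (x + t) + dn 2 f (x - t) - 2 *\<^sub>R dn 2 f x"])
    show "0 \<le> t" using t by auto
    show "((\<lambda>t. dn 1 f (x + t) - dn 1 f (x - t) - (2 * t) *\<^sub>R dn 2 f x) has_vector_derivative
              dn 2 f (x + s) + dn 2 f (x - s) - 2 *\<^sub>R dn 2 f x) (at s)" for s
    proof -
      have "((\<lambda>t. (2 * t) *\<^sub>R dn 2 f x) has_vector_derivative 2 *\<^sub>R dn 2 f x) (at s)"
        by (auto intro!: derivative_eq_intros)
      from has_vector_derivative_diff[OF has_vector_derivative_diff[OF Dp[of 1 s] Dm[of 1 s]] this]
      show ?thesis by (simp add: numeral_eq_Suc algebra_simps)
    qed
    show "norm (dn 2 f (x + s) + dn 2 f (x - s) - 2 *\<^sub>R dn 2 f x) \<le> M * s ^ 2" if "s \<in> {0..t}" for s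
      using s2[of s] that t by simp
  qed (simp)
  then show ?thesis by simp
  qed
  have "norm (f (x + w) + f (x - w) - 2 *\<^sub>R f x - w\<^sup>2 *\<^sub>R dn 2 f x) \<le> (M / 3) * w ^ Suc 3 / Suc 3"
  proof (rule ftc_bound[where \<psi>' = "\<lambda>t. dn 1 f (x + t) - dn 1 f (x - t) - (2 * t) *\<^sub>R dn 2 f x"])
    show "0 \<le> w" using w .
    show "((\<lambda>t. f (x + t) + f (x - t) - 2 *\<^sub>R f x - t\<^sup>2 *\<^sub>R dn 2 f x) has_vector_derivative
              dn 1 f (x + s) - dn 1 f (x - s) - (2 * s) *\<^sub>R dn 2 f x) (at s)" for s
    proof -
      have "((\<lambda>t. t\<^sup>2 *\<^sub>R dn 2 f x) has_vector_derivative (2 * s) *\<^sub>R dn 2 f x) (at s)"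
        by (auto intro!: derivative_eq_intros)
      from has_vector_derivative_diff[OF has_vector_derivative_diff[OF
           has_vector_derivative_add[OF Dp[of 0 s] Dm[of 0 s]] has_vector_derivative_const[of "2 *\<^sub>R f x"]] this]
      show ?thesis by (simp add: algebra_simps)
    qed
    show "norm (dn 1 f (x + s) - dn 1 f (x - s) - (2 * s) *\<^sub>R dn 2 f x) \<le> M / 3 * s ^ 3" if "s \<in> {0..w}" for s
      using s3[of s] that by simp
  qed (simp add: scaleR_2)
  then show ?thesis by simp
qed



definition hh :: "real \<Rightarrow> (real \<Rightarrow> real^'n) \<Rightarrow> real \<Rightarrow> real \<Rightarrow> real^'n" where
  "hh \<alpha> f x w = (2 * w powr (-\<alpha>)) *\<^sub>R ((1 / w\<^sup>2) *\<^sub>R (f (x + w) + f (x - w) - 2 *\<^sub>R f x) - dn 2 f x)"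

lemma hh_bound:
  fixes f :: "real \<Rightarrow> real^'n"
  assumes sc: "smooth_closed_curve f" and M: "\<And>x. norm (dn 4 f x) \<le> M" and w: "0 \<le> w"
  shows "norm (hh \<alpha> f x w) \<le> M / 6 * w powr (2 - \<alpha>)"
proof (cases "w = 0")
  case True then show ?thesis by (simp add: hh_def)
next
  case False
  then have w0: "w > 0" using w by auto
  let ?S = "f (x + w) + f (x - w) - 2 *\<^sub>R f x"
  have eq: "(1 / w\<^sup>2) *\<^sub>R ?S - dn 2 f x = (1 / w\<^sup>2) *\<^sub>R (?S - w\<^sup>2 *\<^sub>R dn 2 f x)"
    using w0 by (simp add: algebra_simps)
  have "norm (hh \<alpha> f x w) = 2 * w powr (-\<alpha>) * ((1 / w\<^sup>2) * norm (?S - w\<^sup>2 *\<^sub>R dn 2 f x))"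
    unfolding hh_def eq using w0 by simp
  also have "\<dots> \<le> 2 * w powr (-\<alpha>) * ((1 / w\<^sup>2) * (M * w ^ 4 / 12))"
    using taylor4[OF sc M w, of x] w0 by (intro mult_left_mono) auto
  also have "\<dots> = M / 6 * (w\<^sup>2 * w powr (-\<alpha>))"
  proof -
    have "1 / w\<^sup>2 * (M * w ^ 4 / 12) = M * w\<^sup>2 / 12" using w0 by (simp add: divide_simps)
    then show ?thesis by simp
  qed
  also have "w\<^sup>2 * w powr (-\<alpha>) = w powr (2 - \<alpha>)"
  proof -
    have "w powr (2 - \<alpha>) = w powr 2 * w powr (-\<alpha>)" by (simp add: powr_add[symmetric])
    also have "w powr 2 = w\<^sup>2" using w0 by (simp add: powr_numeral)
    finally show ?thesis by simp
  qed
  finally show ?thesis .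
qed

lemma sc_cont_comp:
  assumes "smooth_closed_curve f" "continuous_on S a"
  shows "continuous_on S (\<lambda>p. dn k f (a p))"
  using continuous_on_compose2[OF sc_cont[OF assms(1)] assms(2)] by auto

lemma hh_cont2:
  fixes f :: "real \<Rightarrow> real^'n"
  assumes sc: "smooth_closed_curve f" and S: "\<And>p. p \<in> S \<Longrightarrow> snd p > 0"
  shows "continuous_on S (\<lambda>p. hh \<alpha> f (fst p) (snd p))"
proof -
  have c: "continuous_on S (\<lambda>p. dn k f (a p))" if "continuous_on S a" for k a
    using sc_cont_comp[OF sc that] .
  have c1: "continuous_on S (\<lambda>p. f (fst p + snd p))"
    using c[of "\<lambda>p. fst p + snd p" 0] by (simp add: continuous_intros)
  have c2: "continuous_on S (\<lambda>p. f (fst p - snd p))"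
    using c[of "\<lambda>p. fst p - snd p" 0] by (simp add: continuous_intros)
  have c3: "continuous_on S (\<lambda>p. f (fst p))"
    using c[of "\<lambda>p. fst p" 0] by (simp add: continuous_intros)
  have c4: "continuous_on S (\<lambda>p. dn 2 f (fst p))"
    using c[of "\<lambda>p. fst p" 2] by (simp add: continuous_intros)
  have c5: "continuous_on S (\<lambda>p. snd p powr (-\<alpha>))"
  proof -
    have "\<forall>p\<in>S. 0 < snd p" using S by blast
    then show ?thesis by (intro continuous_intros) auto
  qed
  have c6: "continuous_on S (\<lambda>p. 1 / (snd p)\<^sup>2)"
  proof -
    have "\<forall>p\<in>S. snd p \<noteq> 0" using S by (metis less_irrefl)
    then show ?thesis by (intro continuous_intros) auto
  qed
  show ?thesis unfolding hh_def
    by (intro continuous_intros c1 c2 c3 c4 c5 c6)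
qed

lemma hh_cont_w:
  fixes f :: "real \<Rightarrow> real^'n"
  assumes sc: "smooth_closed_curve f" and S: "\<And>w. w \<in> S \<Longrightarrow> w > 0"
  shows "continuous_on S (hh \<alpha> f x)"
proof -
  have "continuous_on ((\<lambda>w. (x, w)) ` S) (\<lambda>p. hh \<alpha> f (fst p) (snd p))"
    using S by (intro hh_cont2[OF sc]) auto
  moreover have "continuous_on S (\<lambda>w. (x, w))" by (intro continuous_intros)
  ultimately have "continuous_on S (\<lambda>w. hh \<alpha> f (fst (x, w)) (snd (x, w)))"
    by (rule continuous_on_compose2) auto
  then show ?thesis by simp
qed

lemma hh_integrable:
  fixes f :: "real \<Rightarrow> real^'n"
  assumes sc: "smooth_closed_curve f" and a: "\<alpha> < 3"
  shows "hh \<alpha> f x integrable_on {0..1/2}"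
proof -
  obtain M where M: "\<And>x. norm (dn 4 f x) \<le> M" using sc_bound[OF sc] by blast
  have "hh \<alpha> f x integrable_on {0<..1/2}"
  proof (rule measurable_bounded_by_integrable_imp_integrable)
    show "hh \<alpha> f x \<in> borel_measurable (lebesgue_on {0<..1/2})"
      by (rule continuous_imp_measurable_on_sets_lebesgue) (auto intro: hh_cont_w[OF sc])
    show "(\<lambda>w. M / 6 * w powr (2 - \<alpha>)) integrable_on {0<..1/2}"
      using integrable_cmul[OF integrable_on_powr_from_0'[of "2 - \<alpha>" "1/2"], of "M/6"] a by simp
    show "norm (hh \<alpha> f x w) \<le> M / 6 * w powr (2 - \<alpha>)" if "w \<in> {0<..1/2}" for w
      using hh_bound[OF sc M] that by auto
  qed auto
  then show ?thesis
    by (rule integrable_spike_set) (auto intro: negligible_subset[of "{0}"])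
qed

lemma hh_tail:
  fixes f :: "real \<Rightarrow> real^'n"
  assumes sc: "smooth_closed_curve f" and a: "\<alpha> < 3" and M: "\<And>x. norm (dn 4 f x) \<le> M"
    and e: "0 < \<epsilon>" "\<epsilon> \<le> 1/2"
  shows "norm (integral {0..1/2} (hh \<alpha> f x) - integral {\<epsilon>..1/2} (hh \<alpha> f x))
         \<le> M / 6 * (\<epsilon> powr (3 - \<alpha>) / (3 - \<alpha>))"
proof -
  have I: "hh \<alpha> f x integrable_on {0..1/2}" using hh_integrable[OF sc a] .
  have "integral {0..\<epsilon>} (hh \<alpha> f x) + integral {\<epsilon>..1/2} (hh \<alpha> f x) = integral {0..1/2} (hh \<alpha> f x)"
    using e I by (intro Henstock_Kurzweil_Integration.integral_combine) auto
  then have eq: "integral {0..1/2} (hh \<alpha> f x) - integral {\<epsilon>..1/2} (hh \<alpha> f x) = integral {0..\<epsilon>} (hh \<alpha> f x)"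
    by (simp add: algebra_simps)
  have P: "((\<lambda>w. w powr (2 - \<alpha>)) has_integral (\<epsilon> powr (2 - \<alpha> + 1) / (2 - \<alpha> + 1))) {0..\<epsilon>}"
    using a e by (intro has_integral_powr_from_0) auto
  have P2: "((\<lambda>w. M / 6 * w powr (2 - \<alpha>)) has_integral (M / 6 * (\<epsilon> powr (3 - \<alpha>) / (3 - \<alpha>)))) {0..\<epsilon>}"
    using has_integral_mult_right[OF P, of "M/6"] by (simp add: algebra_simps)
  have "norm (integral {0..\<epsilon>} (hh \<alpha> f x)) \<le> integral {0..\<epsilon>} (\<lambda>w. M / 6 * w powr (2 - \<alpha>))"
  proof (rule integral_norm_bound_integral)
    show "hh \<alpha> f x integrable_on {0..\<epsilon>}" by (rule integrable_on_subinterval[OF I]) (use e in auto)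
    show "(\<lambda>w. M / 6 * w powr (2 - \<alpha>)) integrable_on {0..\<epsilon>}" using P2 by blast
    show "norm (hh \<alpha> f x w) \<le> M / 6 * w powr (2 - \<alpha>)" if "w \<in> {0..\<epsilon>}" for w
      using hh_bound[OF sc M] that by auto
  qed
  then show ?thesis unfolding eq integral_unique[OF P2] .
qed

lemma gq_sym:
  fixes f :: "real \<Rightarrow> real^'n"
  assumes w: "w > 0"
  shows "(1 / \<bar>w\<bar> powr \<alpha>) *\<^sub>R ((2 / w\<^sup>2) *\<^sub>R (f (x + w) - f x - w *\<^sub>R dn 1 f x) - dn 2 f x)
       + (1 / \<bar>-w\<bar> powr \<alpha>) *\<^sub>R ((2 / (-w)\<^sup>2) *\<^sub>R (f (x + -w) - f x - (-w) *\<^sub>R dn 1 f x) - dn 2 f x)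
       = hh \<alpha> f x w"
  using w unfolding hh_def
  by (simp add: vec_eq_iff powr_minus_divide field_simps)

lemma gq_cont:
  fixes f :: "real \<Rightarrow> real^'n"
  assumes sc: "smooth_closed_curve f" and T: "0 \<notin> T"
  shows "continuous_on T (\<lambda>w. (1 / \<bar>w\<bar> powr \<alpha>) *\<^sub>R ((2 / w\<^sup>2) *\<^sub>R (f (x + w) - f x - w *\<^sub>R dn 1 f x) - dn 2 f x))"
proof -
  have c1: "continuous_on T (\<lambda>w. f (x + w))"
    using sc_cont_comp[OF sc, of T "\<lambda>w. x + w" 0] by (simp add: continuous_intros)
  have nz: "\<forall>w\<in>T. w \<noteq> 0" "\<forall>w\<in>T. 0 < \<bar>w\<bar>" using T by auto
  show ?thesis using nz by (intro continuous_intros c1) auto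
qed

lemma Qop_split:
  fixes f :: "real \<Rightarrow> real^'n"
  assumes sc: "smooth_closed_curve f" and e: "0 < \<epsilon>" "\<epsilon> \<le> 1/2"
  shows "integral {w. \<epsilon> \<le> \<bar>w\<bar> \<and> \<bar>w\<bar> \<le> 1/2}
     (\<lambda>w. (1 / \<bar>w\<bar> powr \<alpha>) *\<^sub>R ((2 / w\<^sup>2) *\<^sub>R (f (x + w) - f x - w *\<^sub>R dn 1 f x) - dn 2 f x))
     = integral {\<epsilon>..1/2} (hh \<alpha> f x)"
proof -
  define g where "g = (\<lambda>w. (1 / \<bar>w\<bar> powr \<alpha>) *\<^sub>R ((2 / w\<^sup>2) *\<^sub>R (f (x + w) - f x - w *\<^sub>R dn 1 f x) - dn 2 f x))"
  have set: "{w. \<epsilon> \<le> \<bar>w\<bar> \<and> \<bar>w\<bar> \<le> 1/2} = {-(1/2)..-\<epsilon>} \<union> {\<epsilon>..1/2}"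
    using e by auto
  have c1: "continuous_on {-(1/2)..-\<epsilon>} g" unfolding g_def using e by (intro gq_cont[OF sc]) auto
  have c2: "continuous_on {\<epsilon>..1/2} g" unfolding g_def using e by (intro gq_cont[OF sc]) auto
  have c3: "continuous_on {\<epsilon>..1/2} (\<lambda>w. g (-w))"
  proof -
    have "continuous_on {\<epsilon>..1/2} (\<lambda>w. -w)" by (intro continuous_intros)
    moreover have "uminus ` {\<epsilon>..1/2} \<subseteq> {-(1/2)..-\<epsilon>}" by auto
    ultimately show ?thesis using continuous_on_compose2[OF c1] by blast
  qed
  have "integral ({-(1/2)..-\<epsilon>} \<union> {\<epsilon>..1/2}) g = integral {-(1/2)..-\<epsilon>} g + integral {\<epsilon>..1/2} g"
    using e c1 c2 by (intro integral_Un integrable_continuous_interval) auto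
  also have "integral {-(1/2)..-\<epsilon>} g = integral {\<epsilon>..1/2} (\<lambda>w. g (-w))"
    using Henstock_Kurzweil_Integration.integral_reflect_real[of "1/2" \<epsilon> "\<lambda>w. g (-w)"] by simp
  also have "integral {\<epsilon>..1/2} (\<lambda>w. g (-w)) + integral {\<epsilon>..1/2} g = integral {\<epsilon>..1/2} (\<lambda>w. g w + g (-w))"
    using c2 c3 by (subst integral_add) (auto intro: integrable_continuous_interval)
  also have "\<dots> = integral {\<epsilon>..1/2} (hh \<alpha> f x)"
  proof (intro integral_cong)
    fix w assume "w \<in> {\<epsilon>..1/2}"
    then have "w > 0" using e by auto
    from gq_sym[OF this] show "g w + g (-w) = hh \<alpha> f x w" unfolding g_def .
  qed
  finally show ?thesis unfolding set g_def .
qed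

lemma Qop_eq:
  fixes f :: "real \<Rightarrow> real^'n"
  assumes sc: "smooth_closed_curve f" and a: "\<alpha> < 3"
  shows "Qop \<alpha> f x = integral {0..1/2} (hh \<alpha> f x)"
proof -
  obtain M where M: "\<And>x. norm (dn 4 f x) \<le> M" using sc_bound[OF sc] by blast
  let ?J = "integral {0..1/2} (hh \<alpha> f x)"
  have lim0: "((\<lambda>\<epsilon>. M / 6 * (\<epsilon> powr (3 - \<alpha>) / (3 - \<alpha>))) \<longlongrightarrow> M / 6 * (0 / (3 - \<alpha>))) (at_right 0)"
  proof -
    have "\<forall>\<^sub>F \<epsilon> in at_right (0::real). 0 \<le> \<epsilon>"
      using eventually_at_right_less[of "0::real"] by (rule eventually_mono) simp
    then show ?thesis using a by (intro tendsto_intros tendsto_zero_powrI) auto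
  qed
  have "((\<lambda>\<epsilon>. integral {\<epsilon>..1/2} (hh \<alpha> f x) - ?J) \<longlongrightarrow> 0) (at_right 0)"
  proof (rule Lim_null_comparison)
    show "\<forall>\<^sub>F \<epsilon> in at_right 0. norm (integral {\<epsilon>..1/2} (hh \<alpha> f x) - ?J) \<le> M / 6 * (\<epsilon> powr (3 - \<alpha>) / (3 - \<alpha>))"
      by (rule eventually_at_rightI[of 0 "1/2"]) (use hh_tail[OF sc a M] in \<open>auto simp: norm_minus_commute\<close>)
  qed (use lim0 in simp)
  then have "((\<lambda>\<epsilon>. integral {\<epsilon>..1/2} (hh \<alpha> f x)) \<longlongrightarrow> ?J) (at_right 0)"
    by (simp add: Lim_null[symmetric])
  moreover have "\<forall>\<^sub>F \<epsilon> in at_right 0. integral {\<epsilon>..1/2} (hh \<alpha> f x) =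
     integral {w. \<epsilon> \<le> \<bar>w\<bar> \<and> \<bar>w\<bar> \<le> 1/2}
     (\<lambda>w. (1 / \<bar>w\<bar> powr \<alpha>) *\<^sub>R ((2 / w\<^sup>2) *\<^sub>R (f (x + w) - f x - w *\<^sub>R dn 1 f x) - dn 2 f x))"
    by (rule eventually_at_rightI[of 0 "1/2"]) (use Qop_split[OF sc] in auto)
  ultimately have "((\<lambda>\<epsilon>. integral {w. \<epsilon> \<le> \<bar>w\<bar> \<and> \<bar>w\<bar> \<le> 1/2}
     (\<lambda>w. (1 / \<bar>w\<bar> powr \<alpha>) *\<^sub>R ((2 / w\<^sup>2) *\<^sub>R (f (x + w) - f x - w *\<^sub>R dn 1 f x) - dn 2 f x))) \<longlongrightarrow> ?J) (at_right 0)"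
    by (rule Lim_transform_eventually)
  then show ?thesis unfolding Qop_def by (intro tendsto_Lim) auto
qed



lemma hvd_cmul: "(g has_vector_derivative g') F \<Longrightarrow> ((\<lambda>x. c *\<^sub>R g x) has_vector_derivative c *\<^sub>R g') F"
  by (rule bounded_linear.has_vector_derivative[OF bounded_linear_scaleR_right])

lemma sc_dshift:
  assumes sc: "smooth_closed_curve f"
  shows "((\<lambda>x. dn k f (x + t)) has_vector_derivative dn (Suc k) f (x + t)) (at x)"
        "((\<lambda>x. dn k f (x - t)) has_vector_derivative dn (Suc k) f (x - t)) (at x)"
proof -
  have "((\<lambda>x. x + t) has_vector_derivative 1) (at x)" by (auto intro!: derivative_eq_intros)
  from vector_diff_chain_at[OF this sc_deriv[OF sc]] 
  show "((\<lambda>x. dn k f (x + t)) has_vector_derivative dn (Suc k) f (x + t)) (at x)" by (simp add: o_def)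
  have "((\<lambda>x. x - t) has_vector_derivative 1) (at x)" by (auto intro!: derivative_eq_intros)
  from vector_diff_chain_at[OF this sc_deriv[OF sc]] 
  show "((\<lambda>x. dn k f (x - t)) has_vector_derivative dn (Suc k) f (x - t)) (at x)" by (simp add: o_def)
qed

lemma hh_deriv_x:
  fixes f :: "real \<Rightarrow> real^'n"
  assumes sc: "smooth_closed_curve f"
  shows "((\<lambda>x. hh \<alpha> f x t) has_vector_derivative hh \<alpha> (dn 1 f) x t) (at x)"
proof -
  have d1: "((\<lambda>x. f (x + t) + f (x - t) - 2 *\<^sub>R f x) has_vector_derivative
            dn 1 f (x + t) + dn 1 f (x - t) - 2 *\<^sub>R dn 1 f x) (at x)"
    using has_vector_derivative_diff[OF has_vector_derivative_add[OF sc_dshift(1)[OF sc, of 0 t x] sc_dshift(2)[OF sc, of 0 t x]]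
        hvd_cmul[OF sc_deriv[OF sc, of 0 x], of 2]] by simp
  have d2: "(dn 2 f has_vector_derivative dn 2 (dn 1 f) x) (at x)"
    using sc_deriv[OF sc, of 2 x] dn_add[of 2 1 f] by (simp add: numeral_eq_Suc)
  show ?thesis unfolding hh_def
    by (intro hvd_cmul has_vector_derivative_diff d1 d2)
qed

lemma J_deriv:
  fixes f :: "real \<Rightarrow> real^'n"
  assumes sc: "smooth_closed_curve f" and e: "0 < \<epsilon>"
  shows "((\<lambda>x. integral {\<epsilon>..1/2} (hh \<alpha> f x)) has_vector_derivative integral {\<epsilon>..1/2} (hh \<alpha> (dn 1 f) x)) (at x)"
proof -
  have sc1: "smooth_closed_curve (dn 1 f)" using sc_dn[OF sc] .
  have "((\<lambda>x. integral (cbox \<epsilon> (1/2)) (hh \<alpha> f x)) has_vector_derivative integral (cbox \<epsilon> (1/2)) (hh \<alpha> (dn 1 f) x)) (at x within UNIV)"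
  proof (rule leibniz_rule_vector_derivative)
    show "((\<lambda>x. hh \<alpha> f x t) has_vector_derivative hh \<alpha> (dn 1 f) x t) (at x within UNIV)" for x t
      using hh_deriv_x[OF sc] by simp
    show "hh \<alpha> f x integrable_on cbox \<epsilon> (1/2)" for x
      unfolding cbox_interval using e by (intro integrable_continuous_interval hh_cont_w[OF sc]) auto
    have "continuous_on (UNIV \<times> cbox \<epsilon> (1/2)) (\<lambda>p. hh \<alpha> (dn 1 f) (fst p) (snd p))"
      using e by (intro hh_cont2[OF sc1]) (auto simp: cbox_interval)
    then show "continuous_on (UNIV \<times> cbox \<epsilon> (1/2)) (\<lambda>(x, t). hh \<alpha> (dn 1 f) x t)"
      by (simp add: case_prod_beta)
  qed auto
  then show ?thesis by (simp add: cbox_interval)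
qed

lemma J_unif:
  fixes f :: "real \<Rightarrow> real^'n"
  assumes sc: "smooth_closed_curve f" and a: "\<alpha> < 3"
  shows "\<exists>K. \<forall>x \<epsilon>. 0 < \<epsilon> \<longrightarrow> \<epsilon> \<le> 1/2 \<longrightarrow>
           norm (integral {\<epsilon>..1/2} (hh \<alpha> f x) - Qop \<alpha> f x) \<le> K * \<epsilon> powr (3 - \<alpha>)"
proof -
  obtain M where M: "\<And>x. norm (dn 4 f x) \<le> M" using sc_bound[OF sc] by blast
  show ?thesis
    by (intro exI[of _ "M / 6 / (3 - \<alpha>)"] allI impI)
       (use hh_tail[OF sc a M] Qop_eq[OF sc a] in \<open>auto simp: norm_minus_commute\<close>)
qed

lemma Qop_deriv:
  fixes f :: "real \<Rightarrow> real^'n"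
  assumes sc: "smooth_closed_curve f" and a: "\<alpha> < 3"
  shows "(Qop \<alpha> f has_vector_derivative Qop \<alpha> (dn 1 f) x) (at x)"
proof -
  have sc1: "smooth_closed_curve (dn 1 f)" using sc_dn[OF sc] .
  define e where "e n = 1 / (2 + real n)" for n :: nat
  have e0: "0 < e n" "e n \<le> 1/2" for n unfolding e_def by (auto simp: field_simps)
  have etend: "(\<lambda>n. e n powr (3 - \<alpha>)) \<longlonglongrightarrow> 0"
  proof -
    have "e \<longlonglongrightarrow> 0" unfolding e_def
      by (intro tendsto_divide_0[OF tendsto_const] filterlim_at_top_imp_at_infinity filterlim_tendsto_add_at_top[OF tendsto_const filterlim_real_sequentially])
    then show ?thesis using a e0 by (intro tendsto_zero_powrI) (auto intro: always_eventually less_imp_le)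
  qed
  obtain K where K: "\<And>x \<epsilon>. 0 < \<epsilon> \<Longrightarrow> \<epsilon> \<le> 1/2 \<Longrightarrow> norm (integral {\<epsilon>..1/2} (hh \<alpha> f x) - Qop \<alpha> f x) \<le> K * \<epsilon> powr (3 - \<alpha>)"
    using J_unif[OF sc a] by blast
  obtain K1 where K1: "\<And>x \<epsilon>. 0 < \<epsilon> \<Longrightarrow> \<epsilon> \<le> 1/2 \<Longrightarrow> norm (integral {\<epsilon>..1/2} (hh \<alpha> (dn 1 f) x) - Qop \<alpha> (dn 1 f) x) \<le> K1 * \<epsilon> powr (3 - \<alpha>)"
    using J_unif[OF sc1 a] by blast
  have conv: "(\<lambda>n. integral {e n..1/2} (hh \<alpha> f x)) \<longlonglongrightarrow> Qop \<alpha> f x" for x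
  proof -
    have "(\<lambda>n. integral {e n..1/2} (hh \<alpha> f x) - Qop \<alpha> f x) \<longlonglongrightarrow> 0"
      by (rule Lim_null_comparison[where g="\<lambda>n. K * e n powr (3 - \<alpha>)"])
         (use K e0 etend in \<open>auto intro!: always_eventually tendsto_mult_right_zero\<close>)
    then show ?thesis by (simp add: Lim_null[symmetric])
  qed
  have "\<exists>g. \<forall>x\<in>UNIV. (\<lambda>n. integral {e n..1/2} (hh \<alpha> f x)) \<longlonglongrightarrow> g x \<and>
          (g has_derivative (\<lambda>h. h *\<^sub>R Qop \<alpha> (dn 1 f) x)) (at x within UNIV)"
  proof (rule has_derivative_sequence[where f' = "\<lambda>n x h. h *\<^sub>R integral {e n..1/2} (hh \<alpha> (dn 1 f) x)"])
    show "((\<lambda>x. integral {e n..1/2} (hh \<alpha> f x)) has_derivative (\<lambda>h. h *\<^sub>R integral {e n..1/2} (hh \<alpha> (dn 1 f) x))) (at x within UNIV)" for n x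
      using J_deriv[OF sc e0(1)] by (simp add: has_vector_derivative_def)
    show "\<forall>\<^sub>F n in sequentially. \<forall>x\<in>UNIV. \<forall>h. norm (h *\<^sub>R integral {e n..1/2} (hh \<alpha> (dn 1 f) x) - h *\<^sub>R Qop \<alpha> (dn 1 f) x) \<le> d * norm h"
      if d: "d > 0" for d
    proof -
      have "\<forall>\<^sub>F n in sequentially. K1 * e n powr (3 - \<alpha>) < d"
        using tendsto_mult_right_zero[OF etend, of K1] d by (auto dest: order_tendstoD)
      then show ?thesis
      proof (rule eventually_mono, intro ballI allI)
        fix n x h assume n: "K1 * e n powr (3 - \<alpha>) < d"
        have "norm (h *\<^sub>R integral {e n..1/2} (hh \<alpha> (dn 1 f) x) - h *\<^sub>R Qop \<alpha> (dn 1 f) x)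
              = \<bar>h\<bar> * norm (integral {e n..1/2} (hh \<alpha> (dn 1 f) x) - Qop \<alpha> (dn 1 f) x)"
          by (simp add: scaleR_diff_right[symmetric])
        also have "\<dots> \<le> \<bar>h\<bar> * d" using K1[OF e0, of n x] n by (intro mult_left_mono) auto
        finally show "norm (h *\<^sub>R integral {e n..1/2} (hh \<alpha> (dn 1 f) x) - h *\<^sub>R Qop \<alpha> (dn 1 f) x) \<le> d * norm h"
          by (simp add: mult.commute)
      qed
    qed
  qed (use conv in auto)
  then obtain g where g: "\<And>x. (\<lambda>n. integral {e n..1/2} (hh \<alpha> f x)) \<longlonglongrightarrow> g x"
    "\<And>x. (g has_derivative (\<lambda>h. h *\<^sub>R Qop \<alpha> (dn 1 f) x)) (at x)" by auto
  have "g = Qop \<alpha> f" using g(1) conv LIMSEQ_unique by blast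
  then show ?thesis using g(2) by (simp add: has_vector_derivative_def)
qed



definition Ek :: "int \<Rightarrow> real \<Rightarrow> complex" where
  "Ek k x = exp (- (2 * of_real pi * \<i> * of_int k * of_real x))"

lemma fc_Ek: "fourier_coeff f k i = integral {0..1} (\<lambda>x. of_real (f x $ i) * Ek k x)"
  by (simp add: fourier_coeff_def Ek_def)

lemma Ek_deriv: "(Ek k has_vector_derivative (- (2 * of_real pi * \<i> * of_int k)) * Ek k x) (at x)"
proof -
  have "((\<lambda>z. exp (- (2 * of_real pi * \<i> * of_int k * z))) has_field_derivative
         exp (- (2 * of_real pi * \<i> * of_int k * of_real x)) * (- (2 * of_real pi * \<i> * of_int k))) (at (of_real x))"
    by (auto intro!: derivative_eq_intros)
  from has_vector_derivative_real_field[OF this] show ?thesis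
    unfolding Ek_def by (simp add: mult.commute)
qed

lemma Ek_add: "Ek k (x + y) = Ek k x * Ek k y"
  unfolding Ek_def by (simp add: exp_add[symmetric] algebra_simps)

lemma Ek_1: "Ek k 1 = 1"
proof -
  have "Ek k 1 = exp ((2 * of_int (-k) * pi) * \<i>)" unfolding Ek_def by (simp add: algebra_simps)
  also have "\<dots> = 1" by (rule exp_integer_2pi) auto
  finally show ?thesis .
qed

lemma Ek_per: "Ek k (x + 1) = Ek k x"
  by (simp add: Ek_add Ek_1)

lemma Ek_cont: "continuous_on S (Ek k)"
  unfolding Ek_def by (intro continuous_intros)

lemma norm_Ek: "norm (Ek k x) = 1"
proof -
  have "- (2 * of_real pi * \<i> * of_int k * of_real x) = \<i> * of_real (- (2 * pi * k * x))" by simp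
  then show ?thesis unfolding Ek_def by (simp only: norm_exp_i_times)
qed

lemma comp_deriv:
  fixes f :: "real \<Rightarrow> real^'n"
  assumes sc: "smooth_closed_curve f"
  shows "((\<lambda>x. complex_of_real (dn j f x $ i)) has_vector_derivative complex_of_real (dn (Suc j) f x $ i)) (at x)"
proof -
  have "((\<lambda>x. dn j f x $ i) has_vector_derivative (dn (Suc j) f x $ i)) (at x)"
    by (rule bounded_linear.has_vector_derivative[OF bounded_linear_vec_nth sc_deriv[OF sc]])
  then show ?thesis by (rule bounded_linear.has_vector_derivative[OF bounded_linear_of_real])
qed

lemma comp_cont:
  fixes f :: "real \<Rightarrow> real^'n"
  assumes sc: "smooth_closed_curve f"
  shows "continuous_on S (\<lambda>x. complex_of_real (dn j f x $ i))"
proof -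
  have "continuous_on UNIV (\<lambda>x. complex_of_real (dn j f x $ i))"
    by (metis continuous_at_imp_continuous_on has_vector_derivative_continuous comp_deriv[OF sc])
  then show ?thesis by (rule continuous_on_subset) auto
qed

lemma per_shift_integral:
  fixes G G' :: "real \<Rightarrow> complex"
  assumes d: "\<And>y. (G has_vector_derivative G' y) (at y)" and c: "continuous_on UNIV G'"
    and p: "\<And>y. G (y + 1) = G y"
  shows "integral {0..1} (\<lambda>x. G (x + w)) = integral {0..1} G"
proof -
  have dd: "((\<lambda>w. G (x + w)) has_vector_derivative G' (x + w)) (at w)" for x w
  proof -
    have "((\<lambda>w. x + w) has_vector_derivative 1) (at w)" by (auto intro!: derivative_eq_intros)
    from vector_diff_chain_at[OF this d] show ?thesis by (simp add: o_def)
  qed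
  have cG: "continuous_on UNIV G"
    by (metis continuous_at_imp_continuous_on has_vector_derivative_continuous d)
  have D: "((\<lambda>w. integral (cbox 0 1) (\<lambda>x. G (x + w))) has_vector_derivative
            integral (cbox 0 1) (\<lambda>x. G' (x + w))) (at w within UNIV)" for w
  proof (rule leibniz_rule_vector_derivative)
    show "((\<lambda>w. G (x + w)) has_vector_derivative G' (x + w)) (at w within UNIV)" for x w
      by (simp add: dd)
    show "(\<lambda>x. G (x + w)) integrable_on cbox 0 1" for w
      unfolding cbox_interval
      by (intro integrable_continuous_interval continuous_on_compose2[OF cG]) (auto intro!: continuous_intros)
    show "continuous_on (UNIV \<times> cbox 0 1) (\<lambda>(w, x). G' (x + w))"
      unfolding case_prod_beta by (rule continuous_on_compose2[OF c]) (auto intro!: continuous_intros)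
  qed auto
  have Z: "integral (cbox 0 1) (\<lambda>x. G' (x + w)) = 0" for w
  proof -
    have "((\<lambda>x. G' (x + w)) has_integral (G (1 + w) - G (0 + w))) {0..1}"
    proof (rule fundamental_theorem_of_calculus)
      show "((\<lambda>x. G (x + w)) has_vector_derivative G' (x + w)) (at x within {0..1})" for x
      proof -
        have "((\<lambda>x. x + w) has_vector_derivative 1) (at x)" by (auto intro!: derivative_eq_intros)
        from vector_diff_chain_at[OF this d] show ?thesis
          by (simp add: o_def has_vector_derivative_at_within)
      qed
    qed auto
    then show ?thesis using p[of w] by (simp add: cbox_interval integral_unique add.commute)
  qed
  have "\<exists>c. \<forall>w\<in>UNIV. integral (cbox 0 1) (\<lambda>x. G (x + w)) = c"
  proof (rule has_derivative_zero_constant)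
    show "((\<lambda>w. integral (cbox 0 1) (\<lambda>x. G (x + w))) has_derivative (\<lambda>h. 0)) (at w within UNIV)" for w
      using D[of w] Z[of w] by (simp add: has_vector_derivative_def)
  qed auto
  then obtain c where "\<And>w. integral {0..1} (\<lambda>x. G (x + w)) = c" by (auto simp: cbox_interval)
  from this[of w] this[of 0] show ?thesis by simp
qed



lemma fc_deriv:
  fixes f :: "real \<Rightarrow> real^'n"
  assumes sc: "smooth_closed_curve f"
  shows "fourier_coeff (dn (Suc j) f) k i = (2 * of_real pi * \<i> * of_int k) * fourier_coeff (dn j f) k i"
proof -
  define c where "c = 2 * of_real pi * \<i> * (of_int k :: complex)"
  define A where "A x = complex_of_real (dn j f x $ i)" for x
  define A' where "A' x = complex_of_real (dn (Suc j) f x $ i)" for x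
  have dA: "(A has_vector_derivative A' x) (at x)" for x
    unfolding A_def A'_def by (rule comp_deriv[OF sc])
  have dE: "(Ek k has_vector_derivative (- c) * Ek k x) (at x)" for x
    unfolding c_def by (rule Ek_deriv)
  have cA: "continuous_on S A" "continuous_on S A'" for S
    unfolding A_def A'_def by (rule comp_cont[OF sc])+
  have I1: "(\<lambda>x. A x * Ek k x) integrable_on {0..1}" "(\<lambda>x. A' x * Ek k x) integrable_on {0..1}"
    by (intro integrable_continuous_interval continuous_intros cA Ek_cont)+
  have "((\<lambda>x. A x * ((- c) * Ek k x) + A' x * Ek k x) has_integral (A 1 * Ek k 1 - A 0 * Ek k 0)) {0..1}"
  proof (rule fundamental_theorem_of_calculus)
    show "((\<lambda>x. A x * Ek k x) has_vector_derivative A x * ((- c) * Ek k x) + A' x * Ek k x) (at x within {0..1})" for x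
      by (rule has_vector_derivative_at_within) (intro has_vector_derivative_mult dA dE)
  qed auto
  moreover have "A 1 * Ek k 1 - A 0 * Ek k 0 = 0"
    using sc_per[OF sc, of j 0] Ek_per[of k 0] unfolding A_def by simp
  ultimately have h0: "((\<lambda>x. A x * ((- c) * Ek k x) + A' x * Ek k x) has_integral 0) {0..1}" by simp
  have h1: "((\<lambda>x. A x * ((- c) * Ek k x)) has_integral (- c) * integral {0..1} (\<lambda>x. A x * Ek k x)) {0..1}"
    using has_integral_mult_right[OF integrable_integral[OF I1(1)], of "- c"]
    by (simp add: mult.left_commute)
  have "((\<lambda>x. A' x * Ek k x) has_integral 0 - (- c) * integral {0..1} (\<lambda>x. A x * Ek k x)) {0..1}"
    using has_integral_diff[OF h0 h1] by simp
  then have "integral {0..1} (\<lambda>x. A' x * Ek k x) = c * integral {0..1} (\<lambda>x. A x * Ek k x)"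
    by (simp add: integral_unique)
  then show ?thesis unfolding fc_Ek A_def A'_def c_def .
qed

lemma fc_shift:
  fixes f :: "real \<Rightarrow> real^'n"
  assumes sc: "smooth_closed_curve f"
  shows "integral {0..1} (\<lambda>x. complex_of_real (dn j f (x + s) $ i) * Ek k x) = Ek k (- s) * fourier_coeff (dn j f) k i"
proof -
  define c where "c = 2 * of_real pi * \<i> * (of_int k :: complex)"
  define A where "A x = complex_of_real (dn j f x $ i)" for x
  define A' where "A' x = complex_of_real (dn (Suc j) f x $ i)" for x
  define E0 where "E0 = Ek k (- s)"
  have dA: "(A has_vector_derivative A' x) (at x)" for x
    unfolding A_def A'_def by (rule comp_deriv[OF sc])
  have dE: "(Ek k has_vector_derivative (- c) * Ek k x) (at x)" for x
    unfolding c_def by (rule Ek_deriv)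
  have cA: "continuous_on S A" "continuous_on S A'" for S
    unfolding A_def A'_def by (rule comp_cont[OF sc])+
  define G where "G y = A y * (Ek k y * E0)" for y
  have "integral {0..1} (\<lambda>x. G (x + s)) = integral {0..1} G"
  proof (rule per_shift_integral)
    show "(G has_vector_derivative (A y * ((- c) * Ek k y * E0) + A' y * (Ek k y * E0))) (at y)" for y
      unfolding G_def by (intro has_vector_derivative_mult has_vector_derivative_mult_left dA dE)
    show "continuous_on UNIV (\<lambda>y. A y * ((- c) * Ek k y * E0) + A' y * (Ek k y * E0))"
      by (intro continuous_intros cA Ek_cont)
    show "G (y + 1) = G y" for y
      unfolding G_def A_def using sc_per[OF sc, of j y] Ek_per[of k y] by simp
  qed
  moreover have "G (x + s) = A (x + s) * Ek k x" for x
  proof -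
    have "Ek k s * Ek k (- s) = 1" using Ek_add[of k s "-s"] by (simp add: Ek_def)
    then show ?thesis unfolding G_def E0_def Ek_add by (simp add: mult.assoc)
  qed
  moreover have "integral {0..1} G = E0 * integral {0..1} (\<lambda>x. A x * Ek k x)"
  proof -
    have "(\<lambda>y. A y * (Ek k y * E0)) = (\<lambda>y. E0 * (A y * Ek k y))" by (auto simp: ac_simps)
    then show ?thesis unfolding G_def by (simp only: integral_mult_right)
  qed
  ultimately show ?thesis unfolding fc_Ek A_def E0_def by simp
qed



definition phi :: "real \<Rightarrow> int \<Rightarrow> real \<Rightarrow> real" where
  "phi \<alpha> k w = 2 * w powr (-\<alpha>) * ((2 * cos (2 * pi * k * w) - 2) / w\<^sup>2 + 4 * pi\<^sup>2 * k\<^sup>2)"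

definition lam :: "real \<Rightarrow> int \<Rightarrow> real \<Rightarrow> real" where
  "lam \<alpha> k \<epsilon> = integral {\<epsilon>..1/2} (phi \<alpha> k)"

lemma Ek_sum: "Ek k (- w) + Ek k w = complex_of_real (2 * cos (2 * pi * k * w))"
  unfolding Ek_def by (simp add: complex_eq_iff Re_exp Im_exp)

lemma hh_comp_cont:
  fixes f :: "real \<Rightarrow> real^'n"
  assumes sc: "smooth_closed_curve f" and S: "\<And>p. p \<in> S \<Longrightarrow> snd p > 0"
  shows "continuous_on S (\<lambda>p. complex_of_real (hh \<alpha> f (fst p) (snd p) $ i) * Ek k (fst p))"
proof -
  have "continuous_on S (\<lambda>p. hh \<alpha> f (fst p) (snd p) $ i)"
    by (rule bounded_linear.continuous_on[OF bounded_linear_vec_nth hh_cont2[OF sc S]])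
  moreover have "continuous_on S (\<lambda>p. Ek k (fst p))"
    by (rule continuous_on_compose2[OF Ek_cont[of UNIV]]) (auto intro: continuous_intros)
  ultimately show ?thesis by (intro continuous_on_mult continuous_on_of_real)
qed

lemma fc_J:
  fixes f :: "real \<Rightarrow> real^'n"
  assumes sc: "smooth_closed_curve f" and e: "0 < \<epsilon>"
  shows "fourier_coeff (\<lambda>x. integral {\<epsilon>..1/2} (hh \<alpha> f x)) k i = of_real (lam \<alpha> k \<epsilon>) * fourier_coeff f k i"
proof -
  define F where "F = fourier_coeff f k i"
  define c where "c = 2 * of_real pi * \<i> * (of_int k :: complex)"
  define H where "H x w = complex_of_real (hh \<alpha> f x w $ i) * Ek k x" for x w
  have step1: "complex_of_real (integral {\<epsilon>..1/2} (hh \<alpha> f x) $ i) * Ek k x = integral {\<epsilon>..1/2} (\<lambda>w. H x w)" for x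
  proof -
    have intg: "hh \<alpha> f x integrable_on {\<epsilon>..1/2}"
      using e by (intro integrable_continuous_interval hh_cont_w[OF sc]) auto
    have "integral {\<epsilon>..1/2} (hh \<alpha> f x) $ i = integral {\<epsilon>..1/2} (\<lambda>w. hh \<alpha> f x w $ i)"
      using integral_component_eq_cart[OF intg] by simp
    moreover have "((\<lambda>w. complex_of_real (hh \<alpha> f x w $ i)) has_integral
                    complex_of_real (integral {\<epsilon>..1/2} (\<lambda>w. hh \<alpha> f x w $ i))) {\<epsilon>..1/2}"
      using integrable_component[OF intg, of "axis i 1"]
      by (intro has_integral_of_real integrable_integral)
         (auto simp: cart_eq_inner_axis[symmetric] intro: integrable_integral)
    ultimately show ?thesis unfolding H_def
      by (simp add: integral_unique)
  qed
  have swap: "integral {0..1} (\<lambda>x. integral {\<epsilon>..1/2} (\<lambda>w. H x w)) =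
              integral {\<epsilon>..1/2} (\<lambda>w. integral {0..1} (\<lambda>x. H x w))"
  proof -
    have "continuous_on (cbox (0, \<epsilon>) (1, 1/2)) (\<lambda>p. complex_of_real (hh \<alpha> f (fst p) (snd p) $ i) * Ek k (fst p))"
      using e by (intro hh_comp_cont[OF sc]) (auto simp: cbox_Pair_eq cbox_interval)
    then have "continuous_on (cbox (0, \<epsilon>) (1, 1/2)) (\<lambda>(x, w). H x w)"
      by (simp add: H_def case_prod_beta)
    from integral_swap_continuous[OF this] show ?thesis by (simp add: cbox_interval)
  qed
  have d2: "fourier_coeff (dn 2 f) k i = c * (c * F)"
    using fc_deriv[OF sc, of 1 k i] fc_deriv[OF sc, of 0 k i] unfolding F_def c_def
    by (simp add: numeral_2_eq_2)
  have inner: "integral {0..1} (\<lambda>x. H x w) = complex_of_real (phi \<alpha> k w) * F" if w: "w \<in> {\<epsilon>..1/2}" for w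
  proof -
    have w0: "w > 0" using w e by auto
    define c0 where "c0 = complex_of_real (2 * w powr (-\<alpha>))"
    define d where "d = complex_of_real (1 / w\<^sup>2)"
    define Ap where "Ap x = complex_of_real (f (x + w) $ i) * Ek k x" for x
    define Am where "Am x = complex_of_real (f (x + - w) $ i) * Ek k x" for x
    define A0 where "A0 x = complex_of_real (f x $ i) * Ek k x" for x
    define A2 where "A2 x = complex_of_real (dn 2 f x $ i) * Ek k x" for x
    have Hx: "(\<lambda>x. H x w) = (\<lambda>x. c0 * d * Ap x + c0 * d * Am x - 2 * c0 * d * A0 x - c0 * A2 x)"
      by (rule ext) (simp add: H_def hh_def c0_def d_def Ap_def Am_def A0_def A2_def algebra_simps)
    have cc: "continuous_on S (\<lambda>x. complex_of_real (dn j f (x + s) $ i) * Ek k x)" for S j s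
    proof -
      have "continuous_on S (\<lambda>x. complex_of_real (dn j f (x + s) $ i))"
        by (rule continuous_on_compose2[OF comp_cont[OF sc, of UNIV j i]]) (auto intro: continuous_intros)
      then show ?thesis by (intro continuous_on_mult Ek_cont)
    qed
    have ii: "((\<lambda>x. complex_of_real (dn j f (x + s) $ i) * Ek k x) has_integral
               integral {0..1} (\<lambda>x. complex_of_real (dn j f (x + s) $ i) * Ek k x)) {0..1}" for j s
      by (intro integrable_integral integrable_continuous_interval cc)
    have iAp: "(Ap has_integral Ek k (- w) * F) {0..1}"
      using ii[of 0 w] fc_shift[OF sc, of 0 w i k] unfolding Ap_def F_def by simp
    have iAm: "(Am has_integral Ek k w * F) {0..1}"
      using ii[of 0 "-w"] fc_shift[OF sc, of 0 "-w" i k] unfolding Am_def F_def by simp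
    have iA0: "(A0 has_integral F) {0..1}"
      using ii[of 0 0] unfolding A0_def F_def fc_Ek by simp
    have iA2: "(A2 has_integral c * (c * F)) {0..1}"
      using ii[of 2 0] d2 unfolding A2_def F_def fc_Ek by simp
    have "((\<lambda>x. H x w) has_integral (c0 * d * (Ek k (- w) * F) + c0 * d * (Ek k w * F) - 2 * c0 * d * F - c0 * (c * (c * F)))) {0..1}"
      unfolding Hx
      by (intro has_integral_diff has_integral_add has_integral_mult_right iAp iAm iA0 iA2)
    moreover have "c0 * d * (Ek k (- w) * F) + c0 * d * (Ek k w * F) - 2 * c0 * d * F - c0 * (c * (c * F))
        = c0 * (d * (Ek k (- w) + Ek k w) - 2 * d - c * c) * F"
      by (simp add: algebra_simps)
    moreover have "c * c = - complex_of_real (4 * pi\<^sup>2 * (real_of_int k)\<^sup>2)"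
      unfolding c_def by (simp add: power2_eq_square algebra_simps)
    moreover have "c0 * (d * complex_of_real (2 * cos (2 * pi * k * w)) - 2 * d + complex_of_real (4 * pi\<^sup>2 * (real_of_int k)\<^sup>2))
        = complex_of_real (phi \<alpha> k w)"
    proof -
      have wc: "complex_of_real w \<noteq> 0" using w0 by simp
      show ?thesis unfolding c0_def d_def phi_def using wc by (simp add: field_simps)
    qed
    ultimately show ?thesis by (simp add: Ek_sum integral_unique)
  qed
  have "fourier_coeff (\<lambda>x. integral {\<epsilon>..1/2} (hh \<alpha> f x)) k i = integral {0..1} (\<lambda>x. integral {\<epsilon>..1/2} (\<lambda>w. H x w))"
    unfolding fc_Ek step1 ..
  also have "\<dots> = integral {\<epsilon>..1/2} (\<lambda>w. complex_of_real (phi \<alpha> k w) * F)"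
    unfolding swap using inner by (intro integral_cong) auto
  also have "\<dots> = integral {\<epsilon>..1/2} (\<lambda>w. complex_of_real (phi \<alpha> k w)) * F"
    by simp
  also have "integral {\<epsilon>..1/2} (\<lambda>w. complex_of_real (phi \<alpha> k w)) = of_real (lam \<alpha> k \<epsilon>)"
  proof -
    have "continuous_on {\<epsilon>..1/2} (phi \<alpha> k)"
    proof -
      have "\<forall>w\<in>{\<epsilon>..1/2}. 0 < w" "\<forall>w\<in>{\<epsilon>..1/2}. w\<^sup>2 \<noteq> 0" using e by auto
      then show ?thesis unfolding phi_def by (intro continuous_intros) auto
    qed
    then have "(phi \<alpha> k has_integral lam \<alpha> k \<epsilon>) {\<epsilon>..1/2}"
      unfolding lam_def by (intro integrable_integral integrable_continuous_interval)
    from has_integral_of_real[OF this] show ?thesis by (rule integral_unique)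
  qed
  finally show ?thesis unfolding F_def .
qed



lemma cos_lower: "1 - t\<^sup>2 / 2 \<le> cos (t::real)"
proof -
  have "cos t = 1 - 2 * sin (t/2) ^ 2" using cos_double_sin[of "t/2"] by simp
  moreover have "sin (t/2) ^ 2 \<le> (t/2)^2"
    using abs_sin_x_le_abs_x[of "t/2"] by (metis abs_ge_zero power2_abs power_mono)
  ultimately show ?thesis by (simp add: power_divide)
qed

lemma phi_nonneg:
  assumes w: "w > 0"
  shows "0 \<le> phi \<alpha> k w"
proof -
  have "2 * cos (2 * pi * k * w) - 2 \<ge> - (2 * pi * k * w)\<^sup>2"
    using cos_lower[of "2 * pi * k * w"] by simp
  then have "(2 * cos (2 * pi * k * w) - 2) / w\<^sup>2 \<ge> - (2 * pi * k * w)\<^sup>2 / w\<^sup>2"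
    using w by (intro divide_right_mono) auto
  also have "- (2 * pi * k * w)\<^sup>2 / w\<^sup>2 = - (4 * pi\<^sup>2 * k\<^sup>2)"
    using w by (simp add: power_mult_distrib)
  finally show ?thesis unfolding phi_def using w by (intro mult_nonneg_nonneg) auto
qed

lemma phi_cont: "0 < a \<Longrightarrow> continuous_on {a..b} (phi \<alpha> k)"
proof -
  assume a: "0 < a"
  have "\<forall>w\<in>{a..b}. 0 < w" "\<forall>w\<in>{a..b}. w\<^sup>2 \<noteq> 0" using a by auto
  then show ?thesis unfolding phi_def by (intro continuous_intros) auto
qed

lemma lam_lower:
  assumes k: "k \<noteq> 0" and a: "0 < \<alpha>" and e: "0 < \<epsilon>" "\<epsilon> \<le> 1 / (3 * \<bar>real_of_int k\<bar>)"
  shows "(4 * pi\<^sup>2 - 36) / 3 * \<bar>real_of_int k\<bar> powr (\<alpha> + 1) \<le> lam \<alpha> k \<epsilon>"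
proof -
  define K where "K = \<bar>real_of_int k\<bar>"
  have K1: "K \<ge> 1" using k unfolding K_def by linarith
  define lo where "lo = 1 / (3 * K)"
  define hi where "hi = 1 / (2 * K)"
  have lohi: "0 < lo" "lo \<le> hi" "hi \<le> 1/2" "\<epsilon> \<le> lo" using K1 e unfolding lo_def hi_def K_def
    by (auto simp: field_simps)
  define L where "L = 2 * K powr \<alpha> * ((4 * pi\<^sup>2 - 36) * K\<^sup>2)"
  have pi9: "pi\<^sup>2 > 9"
  proof -
    have "3 * 3 < pi * pi" using pi_gt3 by (intro mult_strict_mono) auto
    then show ?thesis by (simp add: power2_eq_square)
  qed
  have Lb: "L \<le> phi \<alpha> k w" if w: "w \<in> {lo..hi}" for w
  proof -
    have w0: "w > 0" using w lohi by auto
    have kw: "K * w \<le> 1/2" "K * w \<ge> 1/3" using w K1 unfolding lo_def hi_def by (auto simp: field_simps)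
    have iw: "1 / w \<ge> K" "1 / w \<le> 3 * K"
      using kw w0 by (auto simp: le_divide_eq divide_le_eq algebra_simps)
    have p1: "w powr (-\<alpha>) \<ge> K powr \<alpha>"
    proof -
      have "w powr (-\<alpha>) = (1 / w) powr \<alpha>" using w0 by (simp add: powr_minus_divide powr_divide)
      moreover have "K powr \<alpha> \<le> (1 / w) powr \<alpha>" using iw a K1 by (intro powr_mono2) auto
      ultimately show ?thesis by simp
    qed
    have "(2 * cos (2 * pi * k * w) - 2) / w\<^sup>2 \<ge> - 4 / w\<^sup>2"
    proof -
      have "- 4 \<le> 2 * cos (2 * pi * k * w) - 2" using cos_ge_minus_one[of "2 * pi * k * w"] by linarith
      from divide_right_mono[OF this, of "w\<^sup>2"] show ?thesis by simp
    qed
    moreover have "4 / w\<^sup>2 \<le> 36 * K\<^sup>2"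
    proof -
      have "(1 / w)\<^sup>2 \<le> (3 * K)\<^sup>2" using iw w0 by (intro power_mono) auto
      then show ?thesis by (simp add: power_divide power_mult_distrib)
    qed
    moreover have "(real_of_int k)\<^sup>2 = K\<^sup>2" unfolding K_def by simp
    ultimately have br: "(2 * cos (2 * pi * k * w) - 2) / w\<^sup>2 + 4 * pi\<^sup>2 * k\<^sup>2 \<ge> (4 * pi\<^sup>2 - 36) * K\<^sup>2"
      by (simp add: algebra_simps)
    have brpos: "(4 * pi\<^sup>2 - 36) * K\<^sup>2 \<ge> 0" using pi9 by auto
    show ?thesis unfolding phi_def L_def
      using mult_mono[OF p1 br] brpos by (simp add: mult.assoc)
  qed
  have "lam \<alpha> k \<epsilon> \<ge> integral {lo..hi} (phi \<alpha> k)"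
    unfolding lam_def
  proof (rule integral_subset_le)
    show "{lo..hi} \<subseteq> {\<epsilon>..1/2}" using lohi by auto
    show "phi \<alpha> k integrable_on {lo..hi}" using lohi by (intro integrable_continuous_interval phi_cont) auto
    show "phi \<alpha> k integrable_on {\<epsilon>..1/2}" using e by (intro integrable_continuous_interval phi_cont) auto
    show "\<forall>x\<in>{\<epsilon>..1/2}. 0 \<le> phi \<alpha> k x" using e by (auto intro: phi_nonneg)
  qed
  moreover have "integral {lo..hi} (phi \<alpha> k) \<ge> integral {lo..hi} (\<lambda>_. L)"
    using lohi Lb by (intro integral_le integrable_continuous_interval phi_cont) auto
  moreover have "integral {lo..hi} (\<lambda>_. L) = (hi - lo) * L" using lohi by simp
  moreover have "(hi - lo) * L = (4 * pi\<^sup>2 - 36) / 3 * K powr (\<alpha> + 1)"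
  proof -
    have h1: "hi - lo = 1 / (6 * K)" unfolding hi_def lo_def using K1 by (simp add: field_simps)
    have h2: "K powr (\<alpha> + 1) = K powr \<alpha> * K" using K1 by (simp add: powr_add)
    have "1 / (6 * K) * (2 * K powr \<alpha> * ((4 * pi\<^sup>2 - 36) * K\<^sup>2)) = (4 * pi\<^sup>2 - 36) / 3 * (K powr \<alpha> * K)"
      using K1 by (simp add: field_simps power2_eq_square)
    then show ?thesis unfolding h1 h2 L_def .
  qed
  ultimately show ?thesis unfolding K_def by linarith
qed



lemma dn_Qop:
  fixes \<gamma> :: "real \<Rightarrow> real^'n"
  assumes sc: "smooth_closed_curve \<gamma>" and a: "\<alpha> < 3"
  shows "dn l (Qop \<alpha> \<gamma>) = Qop \<alpha> (dn l \<gamma>)"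
proof (induction l)
  case 0 then show ?case by simp
next
  case (Suc l)
  have "dn (Suc l) (Qop \<alpha> \<gamma>) = (\<lambda>x. vector_derivative (Qop \<alpha> (dn l \<gamma>)) (at x))"
    using Suc by (simp add: dn_Suc)
  also have "\<dots> = (\<lambda>x. Qop \<alpha> (dn 1 (dn l \<gamma>)) x)"
    using Qop_deriv[OF sc_dn[OF sc] a] by (intro ext vector_derivative_at)
  also have "dn 1 (dn l \<gamma>) = dn (Suc l) \<gamma>" using dn_add[of 1 l \<gamma>] by simp
  finally show ?case by simp
qed

lemma fc_int:
  fixes g :: "real \<Rightarrow> real^'n"
  assumes "continuous_on UNIV g"
  shows "(\<lambda>x. complex_of_real (g x $ i) * Ek k x) integrable_on {0..1}"
proof -
  have "continuous_on {0..1} (\<lambda>x. g x $ i)"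
    by (rule bounded_linear.continuous_on[OF bounded_linear_vec_nth continuous_on_subset[OF assms]]) auto
  then show ?thesis by (intro integrable_continuous_interval continuous_on_mult continuous_on_of_real Ek_cont)
qed

lemma Q_lower:
  fixes f :: "real \<Rightarrow> real^'n"
  assumes sc: "smooth_closed_curve f" and a: "2 < \<alpha>" "\<alpha> < 3" and k: "k \<noteq> 0"
  shows "(4 * pi\<^sup>2 - 36) / 3 * \<bar>real_of_int k\<bar> powr (\<alpha> + 1) * cmod (fourier_coeff f k i)
         \<le> cmod (fourier_coeff (Qop \<alpha> f) k i)"
proof -
  define J where "J \<epsilon> x = integral {\<epsilon>..1/2} (hh \<alpha> f x)" for \<epsilon> x
  obtain K where K: "\<And>x \<epsilon>. 0 < \<epsilon> \<Longrightarrow> \<epsilon> \<le> 1/2 \<Longrightarrow> norm (J \<epsilon> x - Qop \<alpha> f x) \<le> K * \<epsilon> powr (3 - \<alpha>)"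
    using J_unif[OF sc a(2)] unfolding J_def by blast
  have cQ: "continuous_on UNIV (Qop \<alpha> f)"
    by (metis continuous_at_imp_continuous_on has_vector_derivative_continuous Qop_deriv[OF sc a(2)])
  have cJ: "continuous_on UNIV (J \<epsilon>)" if "0 < \<epsilon>" for \<epsilon>
    unfolding J_def by (metis continuous_at_imp_continuous_on has_vector_derivative_continuous J_deriv[OF sc that])
  have bound: "norm (fourier_coeff (J \<epsilon>) k i - fourier_coeff (Qop \<alpha> f) k i) \<le> K * \<epsilon> powr (3 - \<alpha>)"
    if e: "0 < \<epsilon>" "\<epsilon> \<le> 1/2" for \<epsilon>
  proof -
    have "fourier_coeff (J \<epsilon>) k i - fourier_coeff (Qop \<alpha> f) k i =
          integral {0..1} (\<lambda>x. complex_of_real ((J \<epsilon> x - Qop \<alpha> f x) $ i) * Ek k x)"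
    proof -
      have i1: "(\<lambda>x. complex_of_real (J \<epsilon> x $ i) * Ek k x) integrable_on {0..1}" by (intro fc_int cJ e)
      have i2: "(\<lambda>x. complex_of_real (Qop \<alpha> f x $ i) * Ek k x) integrable_on {0..1}" by (intro fc_int cQ)
      show ?thesis unfolding fc_Ek integral_diff[OF i1 i2, symmetric]
        by (intro integral_cong) (simp add: left_diff_distrib)
    qed
    also have "norm \<dots> \<le> integral {0..1} (\<lambda>x::real. K * \<epsilon> powr (3 - \<alpha>))"
    proof (rule Henstock_Kurzweil_Integration.integral_norm_bound_integral)
      show "(\<lambda>x. complex_of_real ((J \<epsilon> x - Qop \<alpha> f x) $ i) * Ek k x) integrable_on {0..1}"
        by (intro fc_int continuous_on_diff cJ cQ e)
      show "norm (complex_of_real ((J \<epsilon> x - Qop \<alpha> f x) $ i) * Ek k x) \<le> K * \<epsilon> powr (3 - \<alpha>)" for x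
        using component_le_norm_cart[of "J \<epsilon> x - Qop \<alpha> f x" i] K[OF e, of x]
        by (simp add: norm_mult norm_Ek of_real_diff[symmetric] del: of_real_diff)
    qed auto
    also have "\<dots> = K * \<epsilon> powr (3 - \<alpha>)" by simp
    finally show ?thesis .
  qed
  have lim0: "((\<lambda>\<epsilon>. K * \<epsilon> powr (3 - \<alpha>)) \<longlongrightarrow> K * 0) (at_right 0)"
  proof -
    have "\<forall>\<^sub>F \<epsilon> in at_right (0::real). 0 \<le> \<epsilon>"
      using eventually_at_right_less[of "0::real"] by (rule eventually_mono) simp
    then show ?thesis using a by (intro tendsto_intros tendsto_zero_powrI) auto
  qed
  have conv: "((\<lambda>\<epsilon>. fourier_coeff (J \<epsilon>) k i) \<longlongrightarrow> fourier_coeff (Qop \<alpha> f) k i) (at_right 0)"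
  proof -
    have "((\<lambda>\<epsilon>. fourier_coeff (J \<epsilon>) k i - fourier_coeff (Qop \<alpha> f) k i) \<longlongrightarrow> 0) (at_right 0)"
      by (rule Lim_null_comparison[OF _ lim0[simplified]])
         (rule eventually_at_rightI[of 0 "1/2"], use bound in auto)
    then show ?thesis by (simp add: Lim_null[symmetric])
  qed
  define kk where "kk = \<bar>real_of_int k\<bar>"
  have kk: "kk \<ge> 1" using k unfolding kk_def by linarith
  have ev: "\<forall>\<^sub>F \<epsilon> in at_right 0. (4 * pi\<^sup>2 - 36) / 3 * kk powr (\<alpha> + 1) * cmod (fourier_coeff f k i)
              \<le> cmod (fourier_coeff (J \<epsilon>) k i)"
  proof (rule eventually_at_rightI[of 0 "1 / (3 * kk)"])
    fix \<epsilon> :: real assume e: "\<epsilon> \<in> {0<..<1 / (3 * kk)}"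
    have e2: "\<epsilon> \<le> 1/2"
    proof -
      have "\<epsilon> * 3 \<le> \<epsilon> * (kk * 3)" using kk e by (intro mult_left_mono) auto
      moreover have "\<epsilon> * (kk * 3) < 1" using e kk by (auto simp: field_simps)
      ultimately show ?thesis by linarith
    qed
    have l1: "(4 * pi\<^sup>2 - 36) / 3 * kk powr (\<alpha> + 1) \<le> lam \<alpha> k \<epsilon>"
      using lam_lower[OF k _, of \<alpha> \<epsilon>] e a unfolding kk_def by auto
    have "fourier_coeff (J \<epsilon>) k i = of_real (lam \<alpha> k \<epsilon>) * fourier_coeff f k i"
      unfolding J_def using fc_J[OF sc] e by auto
    then have "cmod (fourier_coeff (J \<epsilon>) k i) = \<bar>lam \<alpha> k \<epsilon>\<bar> * cmod (fourier_coeff f k i)"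
      by (simp add: norm_mult)
    moreover have "lam \<alpha> k \<epsilon> \<le> \<bar>lam \<alpha> k \<epsilon>\<bar>" by simp
    ultimately show "(4 * pi\<^sup>2 - 36) / 3 * kk powr (\<alpha> + 1) * cmod (fourier_coeff f k i)
              \<le> cmod (fourier_coeff (J \<epsilon>) k i)"
      using l1 by (metis mult_right_mono norm_ge_zero order_trans)
  qed (use kk in auto)
  have "(4 * pi\<^sup>2 - 36) / 3 * kk powr (\<alpha> + 1) * cmod (fourier_coeff f k i) \<le> cmod (fourier_coeff (Qop \<alpha> f) k i)"
    by (rule tendsto_lowerbound[OF tendsto_norm[OF conv] ev]) auto
  then show ?thesis unfolding kk_def .
qed



lemma fcn_nonneg: "0 \<le> fourier_coeff_norm_sq f k"
  unfolding fourier_coeff_norm_sq_def by (intro sum_nonneg) auto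

lemma fc3:
  fixes g :: "real \<Rightarrow> real^'n"
  assumes sc: "smooth_closed_curve g"
  shows "fourier_coeff_norm_sq (dn 3 g) k = (2 * pi) ^ 6 * (real_of_int k) ^ 6 * fourier_coeff_norm_sq g k"
proof -
  define c where "c = 2 * of_real pi * \<i> * (of_int k :: complex)"
  have e: "fourier_coeff (dn 3 g) k i = c * (c * (c * fourier_coeff g k i))" for i
    using fc_deriv[OF sc, of 2 k i] fc_deriv[OF sc, of 1 k i] fc_deriv[OF sc, of 0 k i]
    unfolding c_def by (simp add: numeral_3_eq_3 numeral_2_eq_2)
  have nc: "cmod c = 2 * pi * \<bar>real_of_int k\<bar>"
    unfolding c_def by (simp add: norm_mult)
  have "(cmod (fourier_coeff (dn 3 g) k i))\<^sup>2 = (2 * pi) ^ 6 * (real_of_int k) ^ 6 * (cmod (fourier_coeff g k i))\<^sup>2" for i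
  proof -
    have "(cmod (fourier_coeff (dn 3 g) k i))\<^sup>2 = (cmod c) ^ 6 * (cmod (fourier_coeff g k i))\<^sup>2"
      unfolding e by (simp add: norm_mult power_mult_distrib power2_eq_square power_def numeral_eq_Suc)
    also have "(cmod c) ^ 6 = (2 * pi) ^ 6 * (real_of_int k) ^ 6"
      unfolding nc by (simp add: power_mult_distrib power_even_abs)
    finally show ?thesis .
  qed
  then show ?thesis unfolding fourier_coeff_norm_sq_def by (simp add: sum_distrib_left)
qed

lemma Qfcn:
  fixes g :: "real \<Rightarrow> real^'n"
  assumes sc: "smooth_closed_curve g" and a: "2 < \<alpha>" "\<alpha> < 3" and k: "k \<noteq> 0"
  shows "((4 * pi\<^sup>2 - 36) / 3)\<^sup>2 * (\<bar>real_of_int k\<bar> powr (\<alpha> + 1))\<^sup>2 * fourier_coeff_norm_sq g k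
         \<le> fourier_coeff_norm_sq (Qop \<alpha> g) k"
proof -
  define c1 where "c1 = (4 * pi\<^sup>2 - 36) / 3"
  have c1: "c1 > 0"
  proof -
    have "3 * 3 < pi * pi" using pi_gt3 by (intro mult_strict_mono) auto
    then show ?thesis unfolding c1_def by (simp add: power2_eq_square)
  qed
  have "(c1 * \<bar>real_of_int k\<bar> powr (\<alpha> + 1) * cmod (fourier_coeff g k i))\<^sup>2 \<le> (cmod (fourier_coeff (Qop \<alpha> g) k i))\<^sup>2" for i
    using Q_lower[OF sc a k, of i] c1 unfolding c1_def by (intro power_mono) auto
  then have "(\<Sum>i\<in>UNIV. c1\<^sup>2 * (\<bar>real_of_int k\<bar> powr (\<alpha> + 1))\<^sup>2 * (cmod (fourier_coeff g k i))\<^sup>2)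
        \<le> (\<Sum>i\<in>UNIV. (cmod (fourier_coeff (Qop \<alpha> g) k i))\<^sup>2)"
    by (intro sum_mono) (simp add: power_mult_distrib)
  then show ?thesis unfolding fourier_coeff_norm_sq_def c1_def by (simp add: sum_distrib_left)
qed

lemma powr_ineq:
  assumes a: "2 < \<alpha>" and k: "k \<noteq> 0"
  shows "(1 + (real_of_int k)\<^sup>2) powr (\<alpha> - 2) * (real_of_int k) ^ 6 \<le> 2 powr (\<alpha> - 2) * (\<bar>real_of_int k\<bar> powr (\<alpha> + 1))\<^sup>2"
proof -
  define K where "K = \<bar>real_of_int k\<bar>"
  have K: "K \<ge> 1" using k unfolding K_def by linarith
  have k2: "(real_of_int k)\<^sup>2 = K\<^sup>2" "(real_of_int k) ^ 6 = K ^ 6" unfolding K_def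
    by (simp_all add: power_even_abs)
  have "(1 + K\<^sup>2) powr (\<alpha> - 2) \<le> (2 * K\<^sup>2) powr (\<alpha> - 2)"
  proof -
    have "1 \<le> K\<^sup>2" using K by (simp add: one_le_power)
    then show ?thesis using a by (intro powr_mono2) auto
  qed
  also have "(2 * K\<^sup>2) powr (\<alpha> - 2) = 2 powr (\<alpha> - 2) * K powr (2 * (\<alpha> - 2))"
  proof -
    have eq: "K\<^sup>2 = K powr 2" using K by (simp add: powr_numeral)
    have "(2 * K\<^sup>2) powr (\<alpha> - 2) = 2 powr (\<alpha> - 2) * (K\<^sup>2) powr (\<alpha> - 2)"
      by (rule powr_mult)
    also have "(K\<^sup>2) powr (\<alpha> - 2) = K powr (2 * (\<alpha> - 2))"
      unfolding eq by (rule powr_powr)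
    finally show ?thesis .
  qed
  finally have h1: "(1 + K\<^sup>2) powr (\<alpha> - 2) \<le> 2 powr (\<alpha> - 2) * K powr (2 * (\<alpha> - 2))" .
  have h2: "K powr (2 * (\<alpha> - 2)) * K ^ 6 = (K powr (\<alpha> + 1))\<^sup>2"
  proof -
    have "K ^ 6 = K powr (real 6)" using K by (subst powr_realpow) auto
    then have "K powr (2 * (\<alpha> - 2)) * K ^ 6 = K powr (2 * (\<alpha> - 2) + real 6)"
      by (simp only: powr_add)
    also have "2 * (\<alpha> - 2) + real 6 = (\<alpha> + 1) + (\<alpha> + 1)" by simp
    also have "K powr ((\<alpha> + 1) + (\<alpha> + 1)) = (K powr (\<alpha> + 1))\<^sup>2"
      by (simp only: powr_add power2_eq_square)
    finally show ?thesis .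
  qed
  have "(1 + K\<^sup>2) powr (\<alpha> - 2) * K ^ 6 \<le> 2 powr (\<alpha> - 2) * K powr (2 * (\<alpha> - 2)) * K ^ 6"
    using h1 by (intro mult_right_mono) auto
  also have "\<dots> = 2 powr (\<alpha> - 2) * (K powr (\<alpha> + 1))\<^sup>2" using h2 by (simp add: mult.assoc)
  finally show ?thesis unfolding k2 K_def .
qed



definition CC :: "real \<Rightarrow> real" where
  "CC \<alpha> = (2 * pi) ^ 6 * 2 powr (\<alpha> - 2) / ((4 * pi\<^sup>2 - 36) / 3)\<^sup>2"

lemma c1_pos: "(4 * pi\<^sup>2 - 36) / 3 > (0::real)"
proof -
  have "3 * 3 < pi * pi" using pi_gt3 by (intro mult_strict_mono) auto
  then show ?thesis by (simp add: power2_eq_square)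
qed

lemma CC_pos: "CC \<alpha> > 0"
  unfolding CC_def using c1_pos by (intro divide_pos_pos mult_pos_pos) auto

lemma weight_ineq:
  fixes g :: "real \<Rightarrow> real^'n"
  assumes sc: "smooth_closed_curve g" and a: "2 < \<alpha>" "\<alpha> < 3"
  shows "(1 + (real_of_int k)\<^sup>2) powr (m + \<alpha> - 2) * fourier_coeff_norm_sq (dn 3 g) k
         \<le> CC \<alpha> * ((1 + (real_of_int k)\<^sup>2) powr m * fourier_coeff_norm_sq (Qop \<alpha> g) k)"
proof (cases "k = 0")
  case True
  then show ?thesis using fc3[OF sc, of 0] CC_pos[of \<alpha>] fcn_nonneg[of "Qop \<alpha> g" 0]
    by simp
next
  case False
  define P where "P = (1 + (real_of_int k)\<^sup>2) powr m"
  define S where "S = fourier_coeff_norm_sq g k"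
  define c1 where "c1 = (4 * pi\<^sup>2 - 36) / 3"
  define Kp where "Kp = (\<bar>real_of_int k\<bar> powr (\<alpha> + 1))\<^sup>2"
  have c1: "c1 > 0" unfolding c1_def using c1_pos .
  have P0: "P \<ge> 0" "S \<ge> 0" unfolding P_def S_def using fcn_nonneg by auto
  have e1: "(1 + (real_of_int k)\<^sup>2) powr (m + \<alpha> - 2) = P * (1 + (real_of_int k)\<^sup>2) powr (\<alpha> - 2)"
    unfolding P_def by (simp add: powr_add[symmetric] add_diff_eq)
  have "(1 + (real_of_int k)\<^sup>2) powr (m + \<alpha> - 2) * fourier_coeff_norm_sq (dn 3 g) k
        = P * ((1 + (real_of_int k)\<^sup>2) powr (\<alpha> - 2) * (real_of_int k) ^ 6) * ((2 * pi) ^ 6 * S)"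
    unfolding e1 fc3[OF sc] S_def by (simp add: ac_simps)
  also have "\<dots> \<le> P * (2 powr (\<alpha> - 2) * Kp) * ((2 * pi) ^ 6 * S)"
    unfolding Kp_def using powr_ineq[OF a(1) False] P0
    by (intro mult_right_mono mult_left_mono) auto
  also have "\<dots> = P * (CC \<alpha> * (c1\<^sup>2 * Kp * S))"
    unfolding CC_def c1_def[symmetric] using c1 by (simp add: field_simps)
  also have "\<dots> \<le> P * (CC \<alpha> * fourier_coeff_norm_sq (Qop \<alpha> g) k)"
    using Qfcn[OF sc a False] CC_pos[of \<alpha>] P0 unfolding c1_def Kp_def S_def
    by (intro mult_left_mono) auto
  finally show ?thesis unfolding P_def by (simp add: ac_simps)
qed

theorem corollary4p2:
  fixes \<alpha> :: real
  assumes "2 < \<alpha>" and "\<alpha> < 3"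
  shows "\<exists>C>0. \<forall>(\<gamma>::real \<Rightarrow> real^'n) (l::nat) (m::real).
           smooth_closed_curve \<gamma> \<longrightarrow> 0 \<le> m \<longrightarrow>
           Hs_norm (m + \<alpha> - 2) (dn (l + 3) \<gamma>) \<le> ereal C * Hs_norm m (dn l (Qop \<alpha> \<gamma>))"
proof (intro exI[of _ "sqrt (CC \<alpha>)"] conjI allI impI)
  show C0: "sqrt (CC \<alpha>) > 0" using CC_pos by simp
  fix \<gamma> :: "real \<Rightarrow> real^'n" and l :: nat and m :: real
  assume sc: "smooth_closed_curve \<gamma>" and "0 \<le> m"
  define g where "g = dn l \<gamma>"
  have scg: "smooth_closed_curve g" unfolding g_def using sc_dn[OF sc] .
  have d1: "dn (l + 3) \<gamma> = dn 3 g" unfolding g_def using dn_add[of 3 l \<gamma>] by (simp add: add.commute)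
  have d2: "dn l (Qop \<alpha> \<gamma>) = Qop \<alpha> g" unfolding g_def using dn_Qop[OF sc assms(2)] .
  define w1 where "w1 k = (1 + (real_of_int k)\<^sup>2) powr (m + \<alpha> - 2) * fourier_coeff_norm_sq (dn 3 g) k" for k
  define w2 where "w2 k = (1 + (real_of_int k)\<^sup>2) powr m * fourier_coeff_norm_sq (Qop \<alpha> g) k" for k
  have wi: "w1 k \<le> CC \<alpha> * w2 k" for k unfolding w1_def w2_def by (rule weight_ineq[OF scg assms])
  have w10: "0 \<le> w1 k" for k unfolding w1_def by (intro mult_nonneg_nonneg) (auto simp: fcn_nonneg)
  have H1: "Hs_norm (m + \<alpha> - 2) (dn 3 g) = (if w1 summable_on UNIV then ereal (sqrt (infsum w1 UNIV)) else \<infinity>)"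
    unfolding Hs_norm_def w1_def by simp
  have H2: "Hs_norm m (Qop \<alpha> g) = (if w2 summable_on UNIV then ereal (sqrt (infsum w2 UNIV)) else \<infinity>)"
    unfolding Hs_norm_def w2_def by simp
  show "Hs_norm (m + \<alpha> - 2) (dn (l + 3) \<gamma>) \<le> ereal (sqrt (CC \<alpha>)) * Hs_norm m (dn l (Qop \<alpha> \<gamma>))"
  proof (cases "w2 summable_on UNIV")
    case False
    then show ?thesis unfolding d1 d2 H2 using C0 by simp
  next
    case True
    have s2: "(\<lambda>k. CC \<alpha> * w2 k) summable_on UNIV" using summable_on_cmult_right[OF True] .
    have s1: "w1 summable_on UNIV"
      by (rule summable_on_comparison_test[OF s2]) (use wi w10 in auto)
    have "infsum w1 UNIV \<le> infsum (\<lambda>k. CC \<alpha> * w2 k) UNIV"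
      by (rule infsum_mono[OF s1 s2]) (use wi in auto)
    also have "\<dots> = CC \<alpha> * infsum w2 UNIV" by (rule infsum_cmult_right) (use True in auto)
    finally have "sqrt (infsum w1 UNIV) \<le> sqrt (CC \<alpha> * infsum w2 UNIV)" by simp
    also have "\<dots> = sqrt (CC \<alpha>) * sqrt (infsum w2 UNIV)" by (simp add: real_sqrt_mult)
    finally show ?thesis unfolding d1 d2 H1 H2 using s1 True by simp
  qed
qed


end
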